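(* Let $n\in\mathbb{N}$ and for $t\geq 1$ let $$f_n(t)=\sum_{j=0}^{n-1}\binom{n-1}{j}\left(\binom{n}{j+1}t^{2j+1}-\binom{n}{j}t^{2j}\right).$$ Then $f_n^{(i)}(t)\geq 0$ for all $t\geq 1$ and all $i=0,1,\dots,2n-1$.
   Context: $f_n^{(i)}$ denotes the $i$-th derivative of the polynomial $f_n$ (with $f_n^{(0)}=f_n$). *)

theory Defs
  imports "HOL-Computational_Algebra.Polynomial"
begin

definition f_poly :: "nat \<Rightarrow> real poly" where
  "f_poly n = (\<Sum>j=0..n-1. smult (of_nat ((n-1) choose j))
      (smult (of_nat (n choose (j+1))) (monom 1 (2*j+1))
       - smult (of_nat (n choose j)) (monom 1 (2*j))))"

end

theory Submission imports Defs begin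

definition kap :: "nat \<Rightarrow> nat \<Rightarrow> real" where
  "kap N k = coeff ([:1,1:]^N * [:1,-1:]) k"

lemma coeff_mult_lin: "coeff (p * [:1,-1:]) k = coeff p k - (if k = 0 then 0 else coeff p (k-1))"
  for p :: "real poly"
  by (cases k) (auto simp: mult_pCons_right algebra_simps coeff_pCons)

lemma coeff_lin_pow: "coeff ([:a, 1:] ^ m) k = of_nat (m choose k) * a ^ (m - k)"
  for a :: real
proof (cases "k \<le> m")
  case True then show ?thesis by (simp add: coeff_linear_poly_power)
next
  case False
  then have "degree ([:a, 1:] ^ m) < k" using degree_power_le[of "[:a,1:]" m] by auto
  then show ?thesis using False by (simp add: coeff_eq_0)
qed

lemma coeff_lin_pow2: "coeff ([:1, a:] ^ m) k = of_nat (m choose k) * a ^ k"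
  for a :: real
proof (cases "k \<le> m")
  case True then show ?thesis by (simp add: coeff_linear_poly_power)
next
  case False
  have "degree ([:1, a:] ^ m) \<le> degree [:1,a:] * m" by (rule degree_power_le)
  moreover have "degree [:1,a::real:] \<le> 1" by (rule degree_pCons_le[THEN order_trans]) simp
  ultimately have "degree ([:1, a:] ^ m) \<le> m" using order_trans mult_le_mono1 by fastforce
  then have "coeff ([:1, a:] ^ m) k = 0" using False by (intro coeff_eq_0) simp
  then show ?thesis using False by simp
qed

lemma kap_eq: "kap N k = real (N choose k) - (if k = 0 then 0 else real (N choose (k-1)))"
proof -
  have h: "coeff ([:1,1:]^N) j = real (N choose j)" for j
    using coeff_lin_pow[of 1 N j] by simp
  show ?thesis unfolding kap_def coeff_mult_lin h ..
qed

lemma kap_anti: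
  assumes "k + k' = N + 1" shows "kap N k' = - kap N k"
proof -
  consider "k = 0" | "k' = 0" | "k \<ge> 1" "k' \<ge> 1" by linarith
  then show ?thesis
  proof cases
    case 1 then show ?thesis using assms by (simp add: kap_eq)
  next
    case 2 then show ?thesis using assms by (simp add: kap_eq)
  next
    case 3
    have "k' = N - (k-1)" using 3 assms by arith
    then have e1: "N choose k' = N choose (k-1)"
      using binomial_symmetric[of "k-1" N] 3 assms by simp
    have "k' - 1 = N - k" "k \<le> N" using 3 assms by arith+
    then have e2: "N choose (k'-1) = N choose k"
      using binomial_symmetric[of "k" N] by simp
    show ?thesis using 3 e1 e2 by (simp add: kap_eq)
  qed
qed

lemma kap_nonneg:
  assumes "2*k \<le> N + 1" shows "kap N k \<ge> 0"
proof (cases k)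
  case 0 then show ?thesis by (simp add: kap_eq)
next
  case (Suc j)
  have a: "Suc j * (N choose Suc j) = (N - j) * (N choose j)"
    using binomial_absorption[of j N] binomial_absorb_comp[of N j] by simp
  have "Suc j * (N choose j) \<le> (N - j) * (N choose j)"
    using assms Suc by (intro mult_right_mono) auto
  then have "Suc j * (N choose j) \<le> Suc j * (N choose Suc j)" using a by simp
  then have "N choose j \<le> N choose Suc j" by (meson mult_le_cancel1 zero_less_Suc)
  then show ?thesis using Suc by (simp add: kap_eq)
qed

lemma binom_cmp:
  assumes "b \<le> a" "a \<le> n"
  shows "(n choose b) * ((n-1) choose a) \<le> (n choose a) * ((n-1) choose b)"
proof -
  have "n * ((n choose b) * ((n-1) choose a)) = (n choose b) * (n * ((n-1) choose a))"
    by (rule mult.left_commute)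
  also have "\<dots> = (n choose b) * ((n - a) * (n choose a))"
    using binomial_absorb_comp[of n a] by simp
  also have "\<dots> \<le> (n choose b) * ((n - b) * (n choose a))"
    using assms by (intro mult_left_mono mult_right_mono) auto
  also have "\<dots> = (n choose a) * ((n - b) * (n choose b))"
    by (simp only: ac_simps)
  also have "\<dots> = (n choose a) * (n * ((n-1) choose b))"
    using binomial_absorb_comp[of n b] by simp
  also have "\<dots> = n * ((n choose a) * ((n-1) choose b))"
    by (rule mult.left_commute)
  finally have *: "n * ((n choose b) * ((n-1) choose a)) \<le> n * ((n choose a) * ((n-1) choose b))" .
  show ?thesis
  proof (cases "n = 0")
    case True then show ?thesis using assms by simp
  next
    case False then show ?thesis using * by simp
  qed
qed


lemma good_term:
  fixes c :: real
  assumes "c \<ge> 0" "t \<ge> 1"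
  shows "poly ((pderiv ^^ i) (smult c ([:-1,1:]^e))) t \<ge> 0"
  using assms(1)
proof (induction i arbitrary: c e)
  case 0
  then show ?case using assms(2) by simp
next
  case (Suc i)
  have d: "pderiv (smult c ([:-1,1:]^e)) = smult (c * of_nat e) ([:-1,1::real:]^(e-1))"
    by (simp add: pderiv_smult pderiv_power pderiv_pCons)
  have "(pderiv ^^ Suc i) (smult c ([:-1,1:]^e)) = (pderiv ^^ i) (pderiv (smult c ([:-1,1:]^e)))"
    by (simp add: funpow_Suc_right del: funpow.simps)
  then show ?case using Suc.IH[of "c * of_nat e" "e-1"] Suc.prems d by simp
qed

definition hh :: "nat \<Rightarrow> nat \<Rightarrow> nat \<Rightarrow> real" where
  "hh n a b = real (n choose a) * real ((n-1) choose b) * kap (2*n-1-a-b) (n-a)"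

lemma hpair:
  assumes "n \<ge> 1" "b \<le> a" "a \<le> n"
  shows "hh n a b + hh n b a \<ge> 0"
proof (cases "a = n \<and> b = n")
  case True
  have z: "(n-1) choose n = 0" using assms by simp
  from True have e: "a = n" "b = n" by auto
  show ?thesis unfolding e hh_def z by simp
next
  case False
  define N where "N = 2*n-1-a-b"
  have s: "a + b \<le> 2*n - 1" using False assms by auto
  have N2: "2*n-1-b-a = N" unfolding N_def by simp
  have k1: "(n-a) + (n-b) = N + 1" using s assms unfolding N_def by auto
  have k2: "2*(n-a) \<le> N + 1" using s assms unfolding N_def by auto
  have A: "kap N (n-b) = - kap N (n-a)" using kap_anti[OF k1] .
  have B: "kap N (n-a) \<ge> 0" using kap_nonneg[OF k2] .
  have C: "real (n choose b) * real ((n-1) choose a) \<le> real (n choose a) * real ((n-1) choose b)"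
    using binom_cmp[OF assms(2,3)] by (metis of_nat_le_iff of_nat_mult)
  have "hh n a b + hh n b a = (real (n choose a) * real ((n-1) choose b)
           - real (n choose b) * real ((n-1) choose a)) * kap N (n-a)"
    unfolding hh_def N2 A N_def[symmetric] by (simp add: algebra_simps)
  also have "\<dots> \<ge> 0" using B C by simp
  finally show ?thesis by simp
qed

lemma hsym_nonneg:
  assumes "n \<ge> 1" "a \<le> n" "b \<le> n"
  shows "hh n a b + hh n b a \<ge> 0"
proof (cases "b \<le> a")
  case True then show ?thesis using hpair assms by blast
next
  case False then show ?thesis using hpair[of n a b] assms by (simp add: add.commute)
qed

lemma poly_f: "poly (f_poly n) t = (\<Sum>j=0..n-1. real ((n-1) choose j) *
   (real (n choose (j+1)) * t^(2*j+1) - real (n choose j) * t^(2*j)))"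
  by (simp add: f_poly_def poly_sum poly_monom algebra_simps)


lemma identA:
  fixes t :: real
  assumes n: "n = Suc m"
  shows "coeff ([:1,t:]^n * ([:t,1:]^(n-1) * [:1,-1:])) n = poly (f_poly n) t"
proof -
  define P where "P i = real (n choose i) * t^i * (real (m choose (n-i)) * t^(m-(n-i)))" for i
  define Q where "Q i = real (n choose i) * t^i * (if n-i = 0 then 0 else real (m choose (n-i-1)) * t^(m-(n-i-1)))" for i
  have "coeff ([:1,t:]^n * ([:t,1:]^(n-1) * [:1,-1:])) n
     = (\<Sum>i\<le>n. coeff ([:1,t:]^n) i * coeff ([:t,1:]^(n-1) * [:1,-1:]) (n-i))"
    by (rule coeff_mult)
  also have "\<dots> = (\<Sum>i\<le>n. P i - Q i)"
    unfolding coeff_mult_lin coeff_lin_pow coeff_lin_pow2 P_def Q_def using n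
    by (intro sum.cong) (auto simp: algebra_simps)
  also have "\<dots> = (\<Sum>i\<le>n. P i) - (\<Sum>i\<le>n. Q i)" by (simp add: sum_subtractf)
  also have "(\<Sum>i\<le>n. P i) = (\<Sum>j\<le>m. real (m choose j) * real (n choose (j+1)) * t^(2*j+1))"
  proof -
    have "(\<Sum>i\<le>n. P i) = P 0 + (\<Sum>j\<le>m. P (Suc j))" unfolding n by (rule sum.atMost_Suc_shift)
    also have "P 0 = 0" unfolding P_def n by simp
    also have "(\<Sum>j\<le>m. P (Suc j)) = (\<Sum>j\<le>m. real (m choose j) * real (n choose (j+1)) * t^(2*j+1))"
    proof (intro sum.cong refl)
      fix j assume j: "j \<in> {..m}"
      have e1: "n - Suc j = m - j" "m - (m - j) = j" using j n by auto
      have e2: "m choose (m - j) = m choose j" using binomial_symmetric[of j m] j by simp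
      show "P (Suc j) = real (m choose j) * real (n choose (j+1)) * t^(2*j+1)"
      proof -
        have tt: "t^(2*j+1) = t^Suc j*t^j" by (simp add: mult_2 power_add)
        show ?thesis unfolding P_def e1 e2 tt by simp
      qed
    qed
    finally show ?thesis by simp
  qed
  also have "(\<Sum>i\<le>n. Q i) = (\<Sum>j\<le>m. real (m choose j) * real (n choose j) * t^(2*j))"
  proof -
    have "(\<Sum>i\<le>n. Q i) = (\<Sum>j\<le>m. Q j) + Q (Suc m)" unfolding n by (rule sum.atMost_Suc)
    also have "Q (Suc m) = 0" unfolding Q_def n by simp
    also have "(\<Sum>j\<le>m. Q j) = (\<Sum>j\<le>m. real (m choose j) * real (n choose j) * t^(2*j))"
    proof (intro sum.cong refl)
      fix j assume j: "j \<in> {..m}"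
      have e1: "n - j - 1 = m - j" "m - (m - j) = j" "n - j \<noteq> 0" using j n by auto
      have e2: "m choose (m - j) = m choose j" using binomial_symmetric[of j m] j by simp
      show "Q j = real (m choose j) * real (n choose j) * t^(2*j)"
      proof -
        have tt: "t^(2*j) = t^j*t^j" by (simp add: mult_2 power_add)
        show ?thesis unfolding Q_def e1 e2 tt using e1(3) by simp
      qed
    qed
    finally show ?thesis by simp
  qed
  also have "(\<Sum>j\<le>m. real (m choose j) * real (n choose (j+1)) * t^(2*j+1)) -
             (\<Sum>j\<le>m. real (m choose j) * real (n choose j) * t^(2*j)) = poly (f_poly n) t"
    unfolding poly_f n by (simp add: atLeast0AtMost sum_subtractf[symmetric] algebra_simps)
  finally show ?thesis .
qed


lemma const_mult: "[:c:] * p = smult c p" for p :: "real poly"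
  by simp

lemma identB:
  fixes t :: real
  assumes n: "n = Suc m"
  shows "coeff ([:1,t:]^n * ([:t,1:]^(n-1) * [:1,-1:])) n = (\<Sum>a\<le>n. \<Sum>b\<le>m. hh n a b * (t-1)^(a+b))"
proof -
  define s where "s = t - 1"
  define w where "w = [:1,1::real:]"
  define L where "L = [:1,-1::real:]"
  define A where "A a = of_nat (n choose a) * [:0,s:]^a * w^(n-a)" for a
  define B where "B b = of_nat (m choose b) * [:s:]^b * w^(m-b)" for b
  have e1: "[:1,t:] = [:0,s:] + w" unfolding s_def w_def by simp
  have e2: "[:t,1:] = [:s:] + w" unfolding s_def w_def by simp
  have "[:1,t:]^n * ([:t,1:]^(n-1) * [:1,-1:]) = (\<Sum>a\<le>n. A a) * ((\<Sum>b\<le>m. B b) * L)"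
    unfolding e1 e2 binomial_ring A_def B_def L_def using n by simp
  also have "\<dots> = (\<Sum>a\<le>n. \<Sum>b\<le>m. A a * (B b * L))"
    by (simp add: sum_distrib_left sum_distrib_right sum.swap[of _ "{..n}"])
  finally have "coeff ([:1,t:]^n * ([:t,1:]^(n-1) * [:1,-1:])) n = (\<Sum>a\<le>n. \<Sum>b\<le>m. coeff (A a * (B b * L)) n)"
    by (simp add: coeff_sum)
  also have "\<dots> = (\<Sum>a\<le>n. \<Sum>b\<le>m. hh n a b * (t-1)^(a+b))"
  proof (intro sum.cong refl)
    fix a b assume a: "a \<in> {..n}" and b: "b \<in> {..m}"
    have m1: "[:0,s:]^a = monom (s^a) a"
    proof -
      have "[:0,s:] = monom s 1" by (simp add: monom_Suc monom_0)
      then show ?thesis by (simp add: monom_power)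
    qed
    have ex: "(n-a) + (m-b) = 2*n-1-a-b" using a b n by auto
    have pw: "w^(n-a) * w^(m-b) = w^(2*n-1-a-b)" unfolding ex[symmetric] by (rule power_add[symmetric])
    have "A a * (B b * L) = smult (real (n choose a) * real (m choose b) * s^b) (monom (s^a) a * (w^(2*n-1-a-b) * L))"
      unfolding A_def B_def m1 poly_const_pow of_nat_poly pw[symmetric]
      by (simp add: const_mult mult_ac)
    then have "coeff (A a * (B b * L)) n = real (n choose a) * real (m choose b) * s^b * (s^a * kap (2*n-1-a-b) (n-a))"
      using a by (simp add: coeff_monom_mult kap_def L_def w_def)
    then show "coeff (A a * (B b * L)) n = hh n a b * (t-1)^(a+b)"
      unfolding hh_def s_def using n by (simp add: power_add mult_ac)
  qed
  finally show ?thesis .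
qed


theorem mainTheorem6:
  fixes n i :: nat and t :: real
  assumes "n \<ge> 1" and "t \<ge> 1" and "i \<le> 2*n - 1"
  shows "poly ((pderiv ^^ i) (f_poly n)) t \<ge> 0"
proof -
  obtain m where n: "n = Suc m" using assms(1) by (cases n) auto
  define H where "H a b = (hh n a b + hh n b a) / 2" for a b
  have Hnn: "H a b \<ge> 0" if "a \<le> n" "b \<le> n" for a b
    using hsym_nonneg[OF assms(1) that] unfolding H_def by simp
  have ev: "poly (f_poly n) x = (\<Sum>a\<le>n. \<Sum>b\<le>n. H a b * (x-1)^(a+b))" for x :: real
  proof -
    define S where "S = (\<Sum>a\<le>n. \<Sum>b\<le>n. hh n a b * (x-1)^(a+b))"
    have z: "hh n a (Suc m) = 0" for a unfolding hh_def n by simp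
    have "poly (f_poly n) x = (\<Sum>a\<le>n. \<Sum>b\<le>m. hh n a b * (x-1)^(a+b))"
      using identA[OF n, of x] identB[OF n, of x] by simp
    also have "\<dots> = S" unfolding S_def using z by (simp add: n)
    finally have 1: "poly (f_poly n) x = S" .
    have "(\<Sum>a\<le>n. \<Sum>b\<le>n. hh n b a * (x-1)^(a+b)) = (\<Sum>b\<le>n. \<Sum>a\<le>n. hh n b a * (x-1)^(a+b))"
      by (rule sum.swap)
    also have "\<dots> = S" unfolding S_def by (simp add: add.commute)
    finally have 2: "(\<Sum>a\<le>n. \<Sum>b\<le>n. hh n b a * (x-1)^(a+b)) = S" .
    have "(\<Sum>a\<le>n. \<Sum>b\<le>n. H a b * (x-1)^(a+b)) =
       (\<Sum>a\<le>n. \<Sum>b\<le>n. (hh n a b * (x-1)^(a+b) + hh n b a * (x-1)^(a+b)) / 2)"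
      unfolding H_def by (intro sum.cong refl) (simp add: field_simps)
    also have "\<dots> = (\<Sum>a\<le>n. \<Sum>b\<le>n. (hh n a b * (x-1)^(a+b) + hh n b a * (x-1)^(a+b))) / 2"
      by (simp add: sum_divide_distrib)
    also have "\<dots> =
       ((\<Sum>a\<le>n. \<Sum>b\<le>n. hh n a b * (x-1)^(a+b)) + (\<Sum>a\<le>n. \<Sum>b\<le>n. hh n b a * (x-1)^(a+b))) / 2"
      by (simp add: sum.distrib)
    finally have "(\<Sum>a\<le>n. \<Sum>b\<le>n. H a b * (x-1)^(a+b)) =
       ((\<Sum>a\<le>n. \<Sum>b\<le>n. hh n a b * (x-1)^(a+b)) + (\<Sum>a\<le>n. \<Sum>b\<le>n. hh n b a * (x-1)^(a+b))) / 2" .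
    then show ?thesis using 1 2 S_def by simp
  qed
  define G where "G = (\<Sum>a\<le>n. \<Sum>b\<le>n. smult (H a b) ([:-1,1::real:]^(a+b)))"
  have fG: "f_poly n = G"
    by (rule poly_ext) (simp add: ev G_def poly_sum)
  have "poly ((pderiv ^^ i) G) t = (\<Sum>a\<le>n. \<Sum>b\<le>n. poly ((pderiv ^^ i) (smult (H a b) ([:-1,1:]^(a+b)))) t)"
    unfolding G_def by (simp add: higher_pderiv_sum poly_sum)
  also have "\<dots> \<ge> 0"
    by (intro sum_nonneg good_term Hnn assms(2)) auto
  finally show ?thesis unfolding fG .
qed

end
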